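(* Let $P\ge 1$, $m\ge 2$, $y\in\mathbb{R}^P$, $z_1,\dots,z_m\in\mathbb{R}^P$, $Z=[z_1,\dots,z_m]$, $d=(d_1,\dots,d_m)^{\mathsf T}$ with all $d_j>0$, $D=\operatorname{diag}(d)$, $\lambda>0$ and $\rho\in\mathbb{R}$. Assume $d_j>d_1$ for all $j\in\{2,\dots,m\}$ (as is the case when $z_1$ is the unique nearest neighbour of $y$ and the weights are strictly increasing with distance to $y$). Let $$f(\beta)=\tfrac12\,\beta^{\mathsf T}\big(Z^{\mathsf T}Z+\lambda D^{\mathsf T}D\big)\beta+\big(\rho\, d-Z^{\mathsf T}y\big)^{\mathsf T}\beta .$$ If $$\rho>\max_{j\in\{2,\dots,m\}}\frac{(z_1-z_j)^{\mathsf T}(z_1-y)+\lambda d_1^2}{d_j-d_1},$$ then $e_1=(1,0,\dots,0)^{\mathsf T}$ is the (unique) minimiser of $f$ over the unit simplex $\Delta^m=\{\beta\in\mathbb{R}^m:\beta\ge 0,\ \beta^{\mathsf T}\mathbf 1=1\}$. *)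

theory Defs
  imports "HOL-Analysis.Analysis"
begin

text \<open>Vectors in R^m are represented as functions nat => real indexed by 1..m,
  required to vanish outside 1..m. Points in R^P are elements of real^'p.\<close>

definition unit_simplex :: "nat \<Rightarrow> (nat \<Rightarrow> real) set" where
  "unit_simplex m = {\<beta>. (\<forall>j\<in>{1..m}. 0 \<le> \<beta> j) \<and> (\<Sum>j=1..m. \<beta> j) = 1
                        \<and> (\<forall>j. j \<notin> {1..m} \<longrightarrow> \<beta> j = 0)}"

definition e1 :: "nat \<Rightarrow> real" where
  "e1 = (\<lambda>j. if j = 1 then 1 else 0)"

definition objective ::
  "nat \<Rightarrow> (nat \<Rightarrow> real ^ 'p) \<Rightarrow> (nat \<Rightarrow> real) \<Rightarrow> real \<Rightarrow> real \<Rightarrow> real ^ 'p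
     \<Rightarrow> (nat \<Rightarrow> real) \<Rightarrow> real" where
  "objective m z d lam rho y \<beta> =
     1/2 * ((\<Sum>i=1..m. \<Sum>j=1..m. \<beta> i * (z i \<bullet> z j) * \<beta> j)
            + lam * (\<Sum>j=1..m. (d j)^2 * (\<beta> j)^2))
     + (\<Sum>j=1..m. (rho * d j - z j \<bullet> y) * \<beta> j)"

end

theory Submission
  imports Defs
begin

lemma sum_e1: "finite S \<Longrightarrow> (1::nat) \<in> S \<Longrightarrow> (\<Sum>j\<in>S. c j * e1 j) = c 1"
  unfolding e1_def by (simp add: if_distrib[where f="\<lambda>x. c _ * x"] sum.delta cong: if_cong)

theorem proposition2:
  fixes m :: nat and y :: "real ^ 'p" and z :: "nat \<Rightarrow> real ^ 'p"
    and d :: "nat \<Rightarrow> real" and lam rho :: real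
  assumes "m \<ge> 2"
    and "\<forall>j\<in>{1..m}. d j > 0"
    and "lam > 0"
    and "\<forall>j\<in>{2..m}. d j > d 1"
    and "rho > Max ((\<lambda>j. ((z 1 - z j) \<bullet> (z 1 - y) + lam * (d 1)^2) / (d j - d 1)) ` {2..m})"
  shows "e1 \<in> unit_simplex m
     \<and> (\<forall>\<beta>\<in>unit_simplex m. objective m z d lam rho y e1 \<le> objective m z d lam rho y \<beta>)
     \<and> (\<forall>\<beta>\<in>unit_simplex m. objective m z d lam rho y \<beta> = objective m z d lam rho y e1 \<longrightarrow> \<beta> = e1)"
proof -
  define S where "S = {1..m}"
  have fS: "finite S" and oS: "1 \<in> S" using assms(1) by (auto simp: S_def)
  have e1S: "e1 \<in> unit_simplex m"
    unfolding unit_simplex_def using oS fS by (auto simp: S_def e1_def sum.delta)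
  have e1sq: "(e1 j)^2 = e1 j" for j by (simp add: e1_def)
  define G where "G j = z j \<bullet> z 1 + lam * (d j)^2 * e1 j + rho * d j - z j \<bullet> y" for j
  have fe1: "objective m z d lam rho y e1 = 1/2 * (z 1 \<bullet> z 1 + lam * (d 1)^2) + rho * d 1 - z 1 \<bullet> y"
  proof -
    have a: "(\<Sum>i\<in>S. \<Sum>j\<in>S. e1 i * (z i \<bullet> z j) * e1 j) = z 1 \<bullet> z 1"
    proof -
      have "(\<Sum>j\<in>S. e1 i * (z i \<bullet> z j) * e1 j) = (z i \<bullet> z 1) * e1 i" for i
        using sum_e1[OF fS oS, of "\<lambda>j. e1 i * (z i \<bullet> z j)"] by simp
      hence "(\<Sum>i\<in>S. \<Sum>j\<in>S. e1 i * (z i \<bullet> z j) * e1 j) = (\<Sum>i\<in>S. (z i \<bullet> z 1) * e1 i)" by simp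
      also have "\<dots> = z 1 \<bullet> z 1" using sum_e1[OF fS oS, of "\<lambda>i. z i \<bullet> z 1"] by simp
      finally show ?thesis .
    qed
    have b: "(\<Sum>j\<in>S. (d j)^2 * (e1 j)^2) = (d 1)^2"
      using sum_e1[OF fS oS, of "\<lambda>j. (d j)^2"] by (simp add: e1sq)
    have c: "(\<Sum>j\<in>S. (rho * d j - z j \<bullet> y) * e1 j) = rho * d 1 - z 1 \<bullet> y"
      using sum_e1[OF fS oS] by simp
    show ?thesis unfolding objective_def S_def[symmetric] a b c by simp
  qed
  have gpos: "G j - G 1 > 0" if "j \<in> {2..m}" for j
  proof -
    have j1: "j \<noteq> 1" using that by auto
    have fin: "finite ((\<lambda>j. ((z 1 - z j) \<bullet> (z 1 - y) + lam * (d 1)^2) / (d j - d 1)) ` {2..m})" by simp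
    have "((z 1 - z j) \<bullet> (z 1 - y) + lam * (d 1)^2) / (d j - d 1) < rho"
      using Max_ge[OF fin, of "((z 1 - z j) \<bullet> (z 1 - y) + lam * (d 1)^2) / (d j - d 1)"] that assms(5) by force
    moreover have "d j - d 1 > 0" using assms(4) that by auto
    ultimately have "(z 1 - z j) \<bullet> (z 1 - y) + lam * (d 1)^2 < rho * (d j - d 1)"
      by (simp add: divide_less_eq)
    thus ?thesis using j1 unfolding G_def e1_def
      by (simp add: inner_diff_left inner_diff_right inner_commute algebra_simps)
  qed
  have key: "objective m z d lam rho y \<beta> - objective m z d lam rho y e1 =
      1/2 * ((w - z 1) \<bullet> (w - z 1)) + 1/2 * lam * (\<Sum>j\<in>S. (d j)^2 * (\<beta> j - e1 j)^2)
      + (\<Sum>j\<in>S. (G j - G 1) * \<beta> j)"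
    if b: "\<beta> \<in> unit_simplex m" and w: "w = (\<Sum>i\<in>S. \<beta> i *\<^sub>R z i)" for \<beta> w
  proof -
    have s1: "(\<Sum>j\<in>S. \<beta> j) = 1" using b by (simp add: unit_simplex_def S_def)
    have A: "(\<Sum>i\<in>S. \<Sum>j\<in>S. \<beta> i * (z i \<bullet> z j) * \<beta> j) = w \<bullet> w"
      unfolding w by (simp add: inner_sum_left inner_sum_right sum_distrib_left mult.commute mult.left_commute)
        (metis (no_types, lifting) inner_commute sum.cong)
    have Wv: "w \<bullet> v = (\<Sum>j\<in>S. (z j \<bullet> v) * \<beta> j)" for v
      unfolding w by (simp add: inner_sum_left mult.commute)
    have D: "(\<Sum>j\<in>S. (d j)^2 * (\<beta> j - e1 j)^2) =
        (\<Sum>j\<in>S. (d j)^2 * (\<beta> j)^2) - 2 * ((d 1)^2 * \<beta> 1) + (d 1)^2"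
    proof -
      have "(\<Sum>j\<in>S. (d j)^2 * (\<beta> j - e1 j)^2) =
          (\<Sum>j\<in>S. (d j)^2 * (\<beta> j)^2) - 2 * (\<Sum>j\<in>S. ((d j)^2 * \<beta> j) * e1 j) + (\<Sum>j\<in>S. (d j)^2 * e1 j)"
      proof -
        have "(d j)^2 * (\<beta> j - e1 j)^2 = (d j)^2 * (\<beta> j)^2 - 2 * (((d j)^2 * \<beta> j) * e1 j) + (d j)^2 * e1 j" for j
          by (simp add: power2_diff e1sq algebra_simps)
        thus ?thesis by (simp add: sum.distrib sum_subtractf sum_distrib_left)
      qed
      thus ?thesis using sum_e1[OF fS oS, of "\<lambda>j. (d j)^2 * \<beta> j"] sum_e1[OF fS oS, of "\<lambda>j. (d j)^2"] by simp
    qed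
    have Gs: "(\<Sum>j\<in>S. (G j - G 1) * \<beta> j) = (\<Sum>j\<in>S. G j * \<beta> j) - G 1"
    proof -
      have "(\<Sum>j\<in>S. (G j - G 1) * \<beta> j) = (\<Sum>j\<in>S. G j * \<beta> j) - (\<Sum>j\<in>S. G 1 * \<beta> j)"
        by (simp add: left_diff_distrib sum_subtractf)
      also have "(\<Sum>j\<in>S. G 1 * \<beta> j) = G 1 * (\<Sum>j\<in>S. \<beta> j)" by (rule sum_distrib_left[symmetric])
      finally show ?thesis using s1 by simp
    qed
    have Gs2: "(\<Sum>j\<in>S. G j * \<beta> j) = w \<bullet> z 1 + lam * ((d 1)^2 * \<beta> 1) + rho * (\<Sum>j\<in>S. d j * \<beta> j) - w \<bullet> y"
    proof -
      have "(\<Sum>j\<in>S. G j * \<beta> j) = (\<Sum>j\<in>S. (z j \<bullet> z 1) * \<beta> j) + lam * (\<Sum>j\<in>S. ((d j)^2 * \<beta> j) * e1 j)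
           + rho * (\<Sum>j\<in>S. d j * \<beta> j) - (\<Sum>j\<in>S. (z j \<bullet> y) * \<beta> j)"
        unfolding G_def by (simp add: algebra_simps sum.distrib sum_subtractf sum_distrib_left)
      thus ?thesis using sum_e1[OF fS oS, of "\<lambda>j. (d j)^2 * \<beta> j"] Wv by simp
    qed
    have obj: "objective m z d lam rho y \<beta> = 1/2 * (w \<bullet> w + lam * (\<Sum>j\<in>S. (d j)^2 * (\<beta> j)^2))
         + rho * (\<Sum>j\<in>S. d j * \<beta> j) - w \<bullet> y"
      unfolding objective_def S_def[symmetric] A Wv
      by (simp add: algebra_simps sum_subtractf sum_distrib_left)
    have G1: "G 1 = z 1 \<bullet> z 1 + lam * (d 1)^2 + rho * d 1 - z 1 \<bullet> y" by (simp add: G_def e1_def)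
    have E: "(w - z 1) \<bullet> (w - z 1) = w \<bullet> w - 2 * (w \<bullet> z 1) + z 1 \<bullet> z 1"
      by (simp add: inner_diff_left inner_diff_right inner_commute)
    show ?thesis unfolding obj fe1 D Gs Gs2 E
      unfolding G1 by (simp add: algebra_simps)
  qed
  have nn: "(\<Sum>j\<in>S. (G j - G 1) * \<beta> j) \<ge> 0" if b: "\<beta> \<in> unit_simplex m" for \<beta>
  proof (rule sum_nonneg)
    fix j assume j: "j \<in> S"
    have "\<beta> j \<ge> 0" using b j by (auto simp: unit_simplex_def S_def)
    moreover have "G j - G 1 \<ge> 0"
    proof (cases "j = 1")
      case False thus ?thesis using gpos[of j] j by (force simp: S_def)
    qed simp
    ultimately show "(G j - G 1) * \<beta> j \<ge> 0" by simp
  qed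
  have dd: "(\<Sum>j\<in>S. (d j)^2 * (\<beta> j - e1 j)^2) \<ge> 0" for \<beta>
    by (rule sum_nonneg) simp
  have ww: "(v::real^'p) \<bullet> v \<ge> 0" for v by simp
  have part2: "\<forall>\<beta>\<in>unit_simplex m. objective m z d lam rho y e1 \<le> objective m z d lam rho y \<beta>"
  proof
    fix \<beta> assume b: "\<beta> \<in> unit_simplex m"
    show "objective m z d lam rho y e1 \<le> objective m z d lam rho y \<beta>"
      using key[OF b refl] nn[OF b] ww[of "(\<Sum>i\<in>S. \<beta> i *\<^sub>R z i) - z 1"]
        mult_nonneg_nonneg[OF less_imp_le[OF assms(3)] dd[of \<beta>]]
      by linarith
  qed
  have part3: "\<forall>\<beta>\<in>unit_simplex m. objective m z d lam rho y \<beta> = objective m z d lam rho y e1 \<longrightarrow> \<beta> = e1"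
  proof (intro ballI impI)
    fix \<beta> assume b: "\<beta> \<in> unit_simplex m" and eq: "objective m z d lam rho y \<beta> = objective m z d lam rho y e1"
    let ?w = "\<Sum>i\<in>S. \<beta> i *\<^sub>R z i"
    have "lam * (\<Sum>j\<in>S. (d j)^2 * (\<beta> j - e1 j)^2) \<le> 0"
      using key[OF b refl] nn[OF b] ww[of "?w - z 1"] eq by linarith
    hence z0: "(\<Sum>j\<in>S. (d j)^2 * (\<beta> j - e1 j)^2) = 0"
      using dd[of \<beta>] assms(3) by (smt (verit) mult_pos_pos)
    show "\<beta> = e1"
    proof
      fix j show "\<beta> j = e1 j"
      proof (cases "j \<in> S")
        case True
        have "(d j)^2 * (\<beta> j - e1 j)^2 = 0"
          using sum_nonneg_eq_0_iff[OF fS, of "\<lambda>j. (d j)^2 * (\<beta> j - e1 j)^2"] z0 True by simp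
        moreover have "d j \<noteq> 0" using assms(2) True unfolding S_def by fastforce
        ultimately show ?thesis by simp
      next
        case False thus ?thesis using b by (auto simp: unit_simplex_def S_def e1_def)
      qed
    qed
  qed
  show ?thesis using e1S part2 part3 by blast
qed

end
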